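(* For every $n>1$, the logics $\mathrm{Log}_{=1}(\mathbb{R})$ and $\mathrm{Log}_{=1}(\mathbb{R}^n)$ are incomparable under inclusion (neither contains the other).
   Context: Modal formulas are built from a countable set of propositional variables using $\bot$, $\to$ and one unary modality $\lozenge$. A frame is a pair $(X,R)$; a valuation assigns subsets of $X$ to variables; $x\models\lozenge\varphi$ iff there is $y$ with $xRy$ and $y\models\varphi$. A formula is valid in a frame if true at every point under every valuation. For a metric space $(X,d)$, $\mathrm{Log}_{=1}(X)$ is the set of modal formulas valid in the frame $(X,R_{=1})$, where $xR_{=1}y$ iff $d(x,y)=1$. $\mathbb{R}^n$ carries the Euclidean metric. *)

theory Defs
  imports "HOL-Analysis.Analysis"
begin

datatype fm = Var nat | Bot | Imp fm fm | Dia fm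

fun sat :: "'a set \<Rightarrow> ('a \<Rightarrow> 'a \<Rightarrow> bool) \<Rightarrow> (nat \<Rightarrow> 'a set) \<Rightarrow> 'a \<Rightarrow> fm \<Rightarrow> bool" where
  "sat X R V x (Var p) = (x \<in> V p)"
| "sat X R V x Bot = False"
| "sat X R V x (Imp a b) = (sat X R V x a \<longrightarrow> sat X R V x b)"
| "sat X R V x (Dia a) = (\<exists>y\<in>X. R x y \<and> sat X R V y a)"

definition valuation :: "'a set \<Rightarrow> (nat \<Rightarrow> 'a set) \<Rightarrow> bool" where
  "valuation X V = (\<forall>p. V p \<subseteq> X)"

definition valid_in_frame :: "'a set \<Rightarrow> ('a \<Rightarrow> 'a \<Rightarrow> bool) \<Rightarrow> fm \<Rightarrow> bool" where
  "valid_in_frame X R \<phi> = (\<forall>V. valuation X V \<longrightarrow> (\<forall>x\<in>X. sat X R V x \<phi>))"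

definition Log_eq1 :: "'a::metric_space set \<Rightarrow> fm set" where
  "Log_eq1 X = {\<phi>. valid_in_frame X (\<lambda>x y. dist x y = 1) \<phi>}"

end

theory Submission
  imports Defs
begin

definition NotF :: "fm \<Rightarrow> fm" where "NotF a = Imp a Bot"
definition AndF :: "fm \<Rightarrow> fm \<Rightarrow> fm" where "AndF a b = NotF (Imp a (NotF b))"
definition OrF :: "fm \<Rightarrow> fm \<Rightarrow> fm" where "OrF a b = Imp (NotF a) b"

lemma sat_derived[simp]:
  "sat X R V x (NotF a) = (\<not> sat X R V x a)"
  "sat X R V x (AndF a b) = (sat X R V x a \<and> sat X R V x b)"
  "sat X R V x (OrF a b) = (sat X R V x a \<or> sat X R V x b)"
  by (auto simp: NotF_def AndF_def OrF_def)

definition phi1 :: fm where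
  "phi1 = Imp (AndF (Dia (Var 0)) (AndF (Dia (Var 1)) (Dia (Var 2))))
     (OrF (Dia (AndF (Var 0) (Var 1))) (OrF (Dia (AndF (Var 0) (Var 2))) (Dia (AndF (Var 1) (Var 2)))))"

definition phi2 :: fm where
  "phi2 = Imp (AndF (Var 0) (Dia (Var 1))) (Dia (AndF (Dia (Var 0)) (Dia (Var 1))))"

lemma phi1_R: "phi1 \<in> Log_eq1 (UNIV :: real set)"
proof -
  have "sat UNIV (\<lambda>x y. dist x y = 1) V x phi1" for V and x :: real
  proof -
    { fix y1 y2 y3 :: real
      assume "dist x y1 = 1" "dist x y2 = 1" "dist x y3 = 1"
      hence "y1 = y2 \<or> y1 = y3 \<or> y2 = y3" by (auto simp: dist_real_def abs_if split: if_splits) }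
    thus ?thesis unfolding phi1_def by simp metis
  qed
  thus ?thesis by (simp add: Log_eq1_def valid_in_frame_def)
qed

lemma phi1_Rn:
  assumes "CARD('n::finite) > 1"
  shows "phi1 \<notin> Log_eq1 (UNIV :: (real ^ 'n) set)"
proof -
  have "\<not> card (UNIV::'n set) \<le> Suc 0" using assms by simp
  then obtain i j :: 'n where ij: "i \<noteq> j"
    by (auto simp: card_le_Suc0_iff_eq)
  define a1 :: "real^'n" where "a1 = axis i 1"
  define a2 :: "real^'n" where "a2 = - axis i 1"
  define a3 :: "real^'n" where "a3 = axis j 1"
  have c: "a1 $ i = 1" "a2 $ i = -1" "a3 $ i = 0"
    using ij unfolding a1_def a2_def a3_def by (simp_all add: axis_def)
  have d: "a1 \<noteq> a2" "a1 \<noteq> a3" "a2 \<noteq> a3"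
    using c by auto
  have n: "dist 0 a1 = 1" "dist 0 a2 = 1" "dist 0 a3 = 1"
    unfolding a1_def a2_def a3_def by (simp_all add: dist_norm)
  define V :: "nat \<Rightarrow> (real^'n) set" where "V = (\<lambda>k. if k = 0 then {a1} else if k = 1 then {a2} else {a3})"
  have "\<not> sat UNIV (\<lambda>x y. dist x y = 1) V 0 phi1"
    unfolding phi1_def using d n by (simp add: V_def)
  thus ?thesis by (auto simp: Log_eq1_def valid_in_frame_def valuation_def)
qed

lemma apex:
  fixes x y :: "real^'n::finite"
  assumes "CARD('n) > 1" "dist x y = 1"
  shows "\<exists>z. dist x z = 1 \<and> dist y z = 1"
proof -
  have c: "connected (sphere x 1)" using assms(1) by (intro connected_sphere) simp
  have "connected ((\<lambda>z. dist y z) ` sphere x 1)"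
    by (intro connected_continuous_image c continuous_intros)
  moreover have "0 \<in> (\<lambda>z. dist y z) ` sphere x 1"
    using assms(2) by (intro image_eqI[of _ _ y]) auto
  moreover have "2 \<in> (\<lambda>z. dist y z) ` sphere x 1"
  proof (intro image_eqI[of _ _ "2 *\<^sub>R x - y"])
    have "dist y (2 *\<^sub>R x - y) = norm (2 *\<^sub>R (y - x))"
      by (simp add: dist_norm algebra_simps scaleR_2)
    also have "\<dots> = 2" using assms(2) by (simp add: dist_norm norm_minus_commute)
    finally show "2 = dist y (2 *\<^sub>R x - y)" by simp
    have "dist x (2 *\<^sub>R x - y) = norm (y - x)" by (simp add: dist_norm algebra_simps scaleR_2)
    also have "\<dots> = 1" using assms(2) by (metis dist_norm dist_commute)
    finally show "2 *\<^sub>R x - y \<in> sphere x 1" by simp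
  qed
  ultimately have "{0..2} \<subseteq> (\<lambda>z. dist y z) ` sphere x 1"
    by (rule connected_contains_Icc)
  hence "(1::real) \<in> (\<lambda>z. dist y z) ` sphere x 1" by auto
  thus ?thesis by auto
qed

lemma phi2_Rn:
  assumes "CARD('n::finite) > 1"
  shows "phi2 \<in> Log_eq1 (UNIV :: (real ^ 'n) set)"
proof -
  have "sat UNIV (\<lambda>x y. dist x y = 1) V x phi2" for V and x :: "real^'n"
  proof -
    { fix y assume "dist x y = 1"
      then obtain z where "dist x z = 1" "dist y z = 1" using apex assms by blast
      hence "\<exists>z. dist z x = 1 \<and> dist z y = 1" by (metis dist_commute) }
    thus ?thesis unfolding phi2_def by simp (metis dist_commute)
  qed
  thus ?thesis by (simp add: Log_eq1_def valid_in_frame_def)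
qed

lemma phi2_R: "phi2 \<notin> Log_eq1 (UNIV :: real set)"
proof -
  define V :: "nat \<Rightarrow> real set" where "V = (\<lambda>k. if k = 0 then {0} else {1})"
  have "\<not> sat UNIV (\<lambda>x y. dist x y = 1) V 0 phi2"
    unfolding phi2_def by (auto simp: V_def dist_real_def)
  thus ?thesis by (auto simp: Log_eq1_def valid_in_frame_def valuation_def)
qed

theorem proposition3p10:
  assumes "CARD('n::finite) > 1"
  shows "\<not> Log_eq1 (UNIV :: real set) \<subseteq> Log_eq1 (UNIV :: (real ^ 'n) set)
       \<and> \<not> Log_eq1 (UNIV :: (real ^ 'n) set) \<subseteq> Log_eq1 (UNIV :: real set)"
  using phi1_R phi1_Rn[OF assms] phi2_Rn[OF assms] phi2_R by blast

end
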